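(* Let $n\ge1$ be an integer, $p\in(0,1)$, with all notation as in the context. Then for all real $x$, $$Q_n^{\mathrm{Lin,LC}}\Big(x+\frac12\Big)=Q(x):=\begin{cases}Q_n^{\mathrm{Interp}}(x;j)&\text{if } x\in\delta_j \text{ for some } j\in\mathbb{Z}\cap[j_*,n],\\ Q_n^{\mathrm{Lin}}\big(x+\frac12\big)&\text{otherwise.}\end{cases}$$
   Context: $q:=1-p$; $B_n$ is binomial with parameters $n,p$; $Q_n(x):=\mathbf{P}(B_n\ge x)$; $q_j:=Q_n(j)$, $p_j:=q_j-q_{j+1}=\binom nj p^jq^{n-j}$ for $j\in\mathbb{Z}$; $j_*:=\lfloor(n+1)p\rfloor+1$. $Q_n^{\mathrm{Lin}}$ is the linear interpolation of $Q_n$ over $\mathbb{Z}$, i.e. $Q_n^{\mathrm{Lin}}(x)=(1-(x-j))q_j+(x-j)q_{j+1}$ for $j\le x\le j+1$, $j\in\mathbb{Z}$; $Q_n^{\mathrm{Lin,LC}}$ is the least log-concave majorant of $Q_n^{\mathrm{Lin}}$ on $\mathbb{R}$ (smallest $g\ge Q_n^{\mathrm{Lin}}$ with $g\ge0$ and $\ln g$ concave, values $-\infty$ allowed). For integers $j_*\le j\le n$, $x_j:=j-\frac12+\frac{q_j}{p_j}+\big(\frac{q_j}{p_{j-1}}-\frac{q_j}{p_j}\big)/\ln\frac{p_{j-1}}{p_j}$ and $y_j:=j-\frac12+\frac{q_j}{p_{j-1}}+\big(\frac{q_j}{p_{j-1}}-\frac{q_j}{p_j}\big)/\ln\frac{p_{j-1}}{p_j}$;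 for integers $j\ge n+1$, $x_j:=j+\frac12$, $y_j:=j-\frac12$. For integers $j\ge j_*$, $\delta_j:=(y_j,x_j)$ (a nonempty open interval), and for $x\in\delta_j$, $$Q_n^{\mathrm{Interp}}(x;j):=Q_n^{\mathrm{Lin}}\big(y_j+\tfrac12\big)^{1-\delta}\,Q_n^{\mathrm{Lin}}\big(x_j+\tfrac12\big)^{\delta},\qquad\delta:=\frac{x-y_j}{x_j-y_j}.$$ *)

theory Defs
  imports "HOL-Probability.Probability"
begin

definition Qn :: "nat \<Rightarrow> real \<Rightarrow> real \<Rightarrow> real" where
  "Qn n p x = measure_pmf.prob (binomial_pmf n p) {k. x \<le> real k}"

definition qj :: "nat \<Rightarrow> real \<Rightarrow> int \<Rightarrow> real" where
  "qj n p j = Qn n p (real_of_int j)"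

definition pj :: "nat \<Rightarrow> real \<Rightarrow> int \<Rightarrow> real" where
  "pj n p j = qj n p j - qj n p (j + 1)"

definition jstar :: "nat \<Rightarrow> real \<Rightarrow> int" where
  "jstar n p = \<lfloor>(real n + 1) * p\<rfloor> + 1"

definition Qlin :: "nat \<Rightarrow> real \<Rightarrow> real \<Rightarrow> real" where
  "Qlin n p x = (let j = \<lfloor>x\<rfloor> in
      (1 - (x - real_of_int j)) * qj n p j + (x - real_of_int j) * qj n p (j + 1))"

text \<open>Log-concavity of a nonnegative function (ln g concave, value -infinity allowed).\<close>
definition log_concave_fun :: "(real \<Rightarrow> real) \<Rightarrow> bool" where
  "log_concave_fun g \<longleftrightarrow> (\<forall>x. 0 \<le> g x) \<and>
     (\<forall>x y t. 0 < t \<and> t < 1 \<longrightarrow> g x powr (1 - t) * g y powr t \<le> g ((1 - t) * x + t * y))"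

definition QlinLC :: "nat \<Rightarrow> real \<Rightarrow> real \<Rightarrow> real" where
  "QlinLC n p x = Inf {g x | g. log_concave_fun g \<and> (\<forall>y. Qlin n p y \<le> g y)}"

definition xj :: "nat \<Rightarrow> real \<Rightarrow> int \<Rightarrow> real" where
  "xj n p j = (if j \<le> int n then
      real_of_int j - 1/2 + qj n p j / pj n p j
        + (qj n p j / pj n p (j - 1) - qj n p j / pj n p j) / ln (pj n p (j - 1) / pj n p j)
    else real_of_int j + 1/2)"

definition yj :: "nat \<Rightarrow> real \<Rightarrow> int \<Rightarrow> real" where
  "yj n p j = (if j \<le> int n then
      real_of_int j - 1/2 + qj n p j / pj n p (j - 1)
        + (qj n p j / pj n p (j - 1) - qj n p j / pj n p j) / ln (pj n p (j - 1) / pj n p j)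
    else real_of_int j - 1/2)"

definition deltaj :: "nat \<Rightarrow> real \<Rightarrow> int \<Rightarrow> real set" where
  "deltaj n p j = {yj n p j <..< xj n p j}"

definition QInterp :: "nat \<Rightarrow> real \<Rightarrow> real \<Rightarrow> int \<Rightarrow> real" where
  "QInterp n p x j = (let d = (x - yj n p j) / (xj n p j - yj n p j) in
      Qlin n p (yj n p j + 1/2) powr (1 - d) * Qlin n p (xj n p j + 1/2) powr d)"

end

theory Submission
  imports Defs
begin


lemma gdec:
  fixes a b :: real
  assumes "0 < a" "a \<le> b"
  shows "(1 - exp(-b))/b \<le> (1 - exp(-a))/a"
proof -
  have "\<exists>y. DERIV (\<lambda>L. (1 - exp(-L))/L) x :> y \<and> y \<le> 0" if "a \<le> x" "x \<le> b" for x
  proof -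
    have x0: "x > 0" using that assms by simp
    have D: "DERIV (\<lambda>L. (1 - exp(-L))/L) x :> ((exp(-x)) * x - (1 - exp(-x)) * 1) / (x * x)"
      using x0 by (auto intro!: derivative_eq_intros)
    have "exp(-x) * (x + 1) \<le> 1"
    proof -
      have "1 + x \<le> exp x" by simp
      then have "exp(-x) * (1 + x) \<le> exp(-x) * exp x" by (intro mult_left_mono) auto
      then show ?thesis by (simp add: exp_minus field_simps)
    qed
    then have "((exp(-x)) * x - (1 - exp(-x)) * 1) / (x * x) \<le> 0"
      by (intro divide_nonpos_nonneg) (auto simp: algebra_simps)
    then show ?thesis using D by blast
  qed
  then show ?thesis using DERIV_nonpos_imp_nonincreasing[OF assms(2)] by blast
qed

lemma lnbounds:
  fixes r :: real assumes "r > 1"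
  shows "ln r \<le> r - 1" "1 - 1/r \<le> ln r" "0 < ln r"
proof -
  show "ln r \<le> r - 1" using ln_le_minus_one assms by simp
  have "ln (1/r) \<le> 1/r - 1" using ln_le_minus_one assms by simp
  then show "1 - 1/r \<le> ln r" using assms by (simp add: ln_div)
  show "0 < ln r" using assms by simp
qed

lemma cmono:
  fixes r r' :: real assumes "1 < r" "r \<le> r'"
  shows "(1 - 1/r')/ln r' \<le> (1 - 1/r)/ln r"
proof -
  have "(1 - exp(- ln r'))/ln r' \<le> (1 - exp(- ln r))/ln r"
    using assms by (intro gdec) auto
  moreover have "exp (- ln r) = 1/r" "exp (- ln r') = 1/r'" using assms
    by (simp_all add: exp_minus inverse_eq_divide)
  ultimately show ?thesis by simp
qed

lemma geomA:
  fixes r u :: real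
  assumes r: "r > 1" and u: "u > 0" and H: "(u/r) * (r - 1) \<le> 1"
  defines "K \<equiv> (u/r - u) / ln r"
  shows "u/r + K \<le> 0" "-1 \<le> u/r + K" "0 \<le> u + K" "K < 0"
proof -
  define L where "L = ln r"
  have L1: "L \<le> r - 1" and L2: "1 - 1/r \<le> L" and L0: "0 < L"
    using lnbounds[OF r] unfolding L_def by auto
  have K: "K = (u/r - u) / L" unfolding K_def L_def by simp
  have ur: "u/r < u" using r u by (simp add: divide_less_eq)
  show "K < 0" unfolding K using ur L0 by (simp add: divide_neg_pos)
  have "u/r * L + (u/r - u) \<le> 0"
  proof -
    have "u/r * L \<le> u/r * (r - 1)" using L1 u r by (intro mult_left_mono) auto
    also have "\<dots> = u - u/r" using r by (simp add: field_simps)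
    finally show ?thesis by simp
  qed
  moreover have "(u/r + K) * L = u/r * L + (u/r - u)" unfolding K using L0 by (simp add: distrib_right)
  ultimately have "(u/r + K) * L \<le> 0" by simp
  then show "u/r + K \<le> 0" using L0 by (simp add: mult_le_0_iff)
  have "0 \<le> u * L + (u/r - u)"
  proof -
    have "u * (1 - 1/r) \<le> u * L" using L2 u by (intro mult_left_mono) auto
    then show ?thesis using r by (simp add: field_simps)
  qed
  moreover have "(u + K) * L = u * L + (u/r - u)" unfolding K using L0 by (simp add: distrib_right)
  ultimately have "0 \<le> (u + K) * L" by simp
  then show "0 \<le> u + K" using L0 by (simp add: zero_le_mult_iff)
  define v where "v = u/r"
  have v0: "v > 0" unfolding v_def using u r by simp
  have uv: "u = v * r" unfolding v_def using r by simp
  have "v * (r - 1 - L) \<le> L"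
  proof -
    have "v * (r - 1 - L) * (r - 1) \<le> (r - 1 - L)"
    proof -
      have "v * (r - 1) * (r - 1 - L) \<le> 1 * (r - 1 - L)"
        using H L1 unfolding v_def by (intro mult_right_mono) auto
      then show ?thesis by (simp add: algebra_simps)
    qed
    also have "\<dots> \<le> L * (r - 1)"
    proof -
      have "(r - 1) / r \<le> L" using L2 r by (simp add: field_simps)
      then have "r - 1 \<le> L * r" using r by (simp add: field_simps)
      then show ?thesis by (simp add: algebra_simps)
    qed
    finally show ?thesis using r by simp
  qed
  then have "-L \<le> v * L + v - u" using uv by (simp add: algebra_simps)
  moreover have "(v + (v - u)/L) * L = v * L + v - u" using L0 by (simp add: distrib_right)
  ultimately have "-1 * L \<le> (v + (v - u)/L) * L" by simp
  then have "-1 \<le> v + (v - u)/L" using L0 by (meson mult_le_cancel_right_pos)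
  then show "-1 \<le> u/r + K" unfolding K v_def .
qed

lemma F4abs:
  fixes r r' v :: real
  assumes r: "1 < r" "r \<le> r'" and v: "0 \<le> v" and H: "v * (r' - 1) \<le> 1"
  shows "v * (r' - 1) / ln r' \<le> (1 + v) * (1 - 1/r) / ln r"
proof -
  have r'1: "r' > 1" using r by simp
  have "v * (r' - 1) / ln r' = (v * r') * ((1 - 1/r') / ln r')"
    using r'1 by (simp add: field_simps)
  also have "\<dots> \<le> (1 + v) * ((1 - 1/r') / ln r')"
  proof (rule mult_right_mono)
    show "v * r' \<le> 1 + v" using H by (simp add: algebra_simps)
    show "0 \<le> (1 - 1/r') / ln r'" using r'1 by (simp add: field_simps)
  qed
  also have "\<dots> \<le> (1 + v) * ((1 - 1/r) / ln r)"
    using cmono[OF r] v by (intro mult_left_mono) auto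
  finally show ?thesis by simp
qed



locale bctx =
  fixes n :: nat and p :: real
  assumes n1: "n \<ge> 1" and p0: "0 < p" and p1: "p < 1"
begin

abbreviation "M \<equiv> binomial_pmf n p"

lemma setM: "set_pmf M = {..n}" using p0 p1 by simp

lemma pmfM: "pmf M k = (n choose k) * p^k * (1 - p)^(n - k)"
  using p0 p1 by simp

lemma qj_le0: "k \<le> 0 \<Longrightarrow> qj n p k = 1"
proof -
  assume "k \<le> 0"
  then have "{i::nat. real_of_int k \<le> real i} = UNIV" by auto
  then show ?thesis unfolding qj_def Qn_def by simp
qed

lemma qj_gt: "k \<ge> int n + 1 \<Longrightarrow> qj n p k = 0"
proof -
  assume "k \<ge> int n + 1"
  then have "set_pmf M \<inter> {i::nat. real_of_int k \<le> real i} = {}"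
    unfolding setM by auto
  then show ?thesis unfolding qj_def Qn_def using measure_pmf_zero_iff by blast
qed

lemma qj_nonneg: "0 \<le> qj n p k" unfolding qj_def Qn_def by simp
lemma qj_le1: "qj n p k \<le> 1" unfolding qj_def Qn_def by simp

lemma pj_nat: "pj n p (int k) = (n choose k) * p^k * (1 - p)^(n - k)"
proof -
  have sub: "{i::nat. real (k+1) \<le> real i} \<subseteq> {i::nat. real k \<le> real i}" by auto
  have diff: "{i::nat. real k \<le> real i} - {i::nat. real (k+1) \<le> real i} = {k}" by auto
  have "pj n p (int k) = measure M {i::nat. real k \<le> real i} - measure M {i::nat. real (k+1) \<le> real i}"
    unfolding pj_def qj_def Qn_def by (simp add: add.commute)
  also have "\<dots> = measure M {k}"
    using measure_pmf.finite_measure_Diff[of "{i::nat. real k \<le> real i}" M "{i::nat. real (k+1) \<le> real i}"] sub diff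
    by simp
  also have "\<dots> = pmf M k" by (rule measure_pmf_single)
  finally show ?thesis using pmfM by simp
qed

lemma pj_neg: "k < 0 \<Longrightarrow> pj n p k = 0"
  unfolding pj_def using qj_le0[of k] qj_le0[of "k+1"] by simp

lemma pj_pos: "0 \<le> k \<Longrightarrow> k \<le> int n \<Longrightarrow> pj n p k > 0"
proof -
  assume a: "0 \<le> k" "k \<le> int n"
  then obtain m where m: "k = int m" "m \<le> n" by (metis nat_0_le nat_le_iff)
  then show ?thesis using pj_nat[of m] p0 p1 by simp
qed

lemma pj_nonneg: "pj n p k \<ge> 0"
proof (cases "k < 0")
  case True then show ?thesis using pj_neg by simp
next
  case False
  then obtain m where m: "k = int m" by (metis nonneg_int_cases not_less)
  then show ?thesis using pj_nat[of m] p0 p1 by simp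
qed

lemma qj_split: "qj n p k = pj n p k + qj n p (k+1)"
  unfolding pj_def by simp

lemma qj_pos: "k \<le> int n \<Longrightarrow> qj n p k > 0"
proof (cases "k \<le> 0")
  case True then show ?thesis using qj_le0 by simp
next
  case False
  assume "k \<le> int n"
  then show ?thesis using qj_split[of k] pj_pos[of k] qj_nonneg[of "k+1"] False by simp
qed

lemma ratio_nat: "m < n \<Longrightarrow> pj n p (int m) * (real n - real m) * p = pj n p (int m + 1) * (real m + 1) * (1 - p)"
proof -
  assume mn: "m < n"
  have c: "real (Suc m) * real (n choose Suc m) = (real n - real m) * real (n choose m)"
  proof -
    have "Suc m * (n choose Suc m) = (n - m) * (n choose m)"
      by (metis binomial_absorb_comp binomial_absorption)
    then have "real (Suc m * (n choose Suc m)) = real ((n - m) * (n choose m))" by simp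
    then show ?thesis using mn by (simp add: of_nat_diff algebra_simps)
  qed
  have e: "n - m = Suc (n - Suc m)" using mn by simp
  have "pj n p (int m + 1) * (real m + 1) * (1 - p)
      = (real (Suc m) * real (n choose Suc m)) * p^Suc m * (1-p)^(n - Suc m) * (1 - p)"
    using pj_nat[of "Suc m"] by (simp add: algebra_simps)
  also have "\<dots> = (real n - real m) * real (n choose m) * p^Suc m * (1-p)^(n - m)"
    unfolding c e by (simp add: algebra_simps)
  also have "\<dots> = pj n p (int m) * (real n - real m) * p"
    using pj_nat[of m] by (simp add: algebra_simps)
  finally show ?thesis by simp
qed

lemma ratio: "1 \<le> k \<Longrightarrow> k \<le> int n \<Longrightarrow>
   pj n p (k - 1) * (real n - real_of_int k + 1) * p = pj n p k * real_of_int k * (1 - p)"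
proof -
  assume a: "1 \<le> k" "k \<le> int n"
  define m where "m = nat (k - 1)"
  have m: "k = int m + 1" "m < n" using a unfolding m_def by auto
  show ?thesis using ratio_nat[OF m(2)] unfolding m by simp
qed

abbreviation "P k \<equiv> pj n p k"
abbreviation "Q k \<equiv> qj n p k"
abbreviation "js \<equiv> jstar n p"

lemma js_ge1: "js \<ge> 1"
  unfolding jstar_def using p0 by simp

lemma js_le: "js \<le> int n + 1"
proof -
  have "(real n + 1) * p < real n + 1" using p1 by simp
  then have "\<lfloor>(real n + 1) * p\<rfloor> < int n + 1"
    by (metis floor_less_iff of_int_1 of_int_add of_int_of_nat_eq)
  then show ?thesis unfolding jstar_def by simp
qed

lemma below_js: "k \<le> js - 1 \<Longrightarrow> real_of_int k \<le> (real n + 1) * p"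
  unfolding jstar_def by (simp add: le_floor_iff)

lemma above_js: "k \<ge> js \<Longrightarrow> real_of_int k > (real n + 1) * p"
  unfolding jstar_def by (metis add.commute floor_less_iff int_one_le_iff_zero_less
    le_add_diff_inverse2 not_le zle_add1_eq_le)

lemma P_incr: "1 \<le> k \<Longrightarrow> k \<le> js - 1 \<Longrightarrow> P (k - 1) \<le> P k"
proof -
  assume a: "1 \<le> k" "k \<le> js - 1"
  have kn: "k \<le> int n" using a js_le by simp
  have r: "P (k - 1) * (real n - real_of_int k + 1) * p = P k * real_of_int k * (1 - p)"
    using ratio a kn by simp
  have X: "(real n - real_of_int k + 1) * p > 0" using kn p0 by simp
  have Y: "real_of_int k * (1 - p) \<le> (real n - real_of_int k + 1) * p"
    using below_js[OF a(2)] by (simp add: algebra_simps)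
  have "P (k - 1) * ((real n - real_of_int k + 1) * p) \<le> P k * ((real n - real_of_int k + 1) * p)"
    using r mult_left_mono[OF Y pj_nonneg[of k]] by (simp add: mult.assoc)
  then show ?thesis using X by (meson mult_le_cancel_right_pos)
qed

lemma P_decr: "js \<le> k \<Longrightarrow> k \<le> int n \<Longrightarrow> P (k - 1) > P k"
proof -
  assume a: "js \<le> k" "k \<le> int n"
  have k1: "1 \<le> k" using a js_ge1 by simp
  have r: "P (k - 1) * (real n - real_of_int k + 1) * p = P k * real_of_int k * (1 - p)"
    using ratio a k1 by simp
  have X: "(real n - real_of_int k + 1) * p > 0" using a p0 by simp
  have Y: "real_of_int k * (1 - p) > (real n - real_of_int k + 1) * p"
    using above_js[OF a(1)] by (simp add: algebra_simps)
  have "P (k - 1) * ((real n - real_of_int k + 1) * p) > P k * ((real n - real_of_int k + 1) * p)"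
    using r mult_strict_left_mono[OF Y pj_pos[of k]] a k1 by (simp add: mult.assoc)
  then show ?thesis using X by (meson mult_less_cancel_right_pos)
qed

lemma P_lc: "1 \<le> m \<Longrightarrow> m + 1 \<le> int n \<Longrightarrow> P (m - 1) * P (m + 1) \<le> P m ^ 2"
proof -
  assume a: "1 \<le> m" "m + 1 \<le> int n"
  have r1: "P (m - 1) * (real n - real_of_int m + 1) * p = P m * real_of_int m * (1 - p)"
    using ratio a by simp
  have r2: "P m * (real n - real_of_int m) * p = P (m + 1) * (real_of_int m + 1) * (1 - p)"
    using ratio[of "m+1"] a by simp
  define X where "X = P (m - 1) * P (m + 1)"
  have "X * ((real n - real_of_int m + 1) * (real_of_int m + 1) * (p * (1 - p)))
      = (P (m - 1) * (real n - real_of_int m + 1) * p) * (P (m + 1) * (real_of_int m + 1) * (1 - p))"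
    unfolding X_def by (simp add: algebra_simps)
  also have "\<dots> = (P m * real_of_int m * (1 - p)) * (P m * (real n - real_of_int m) * p)"
    using r1 r2 by simp
  also have "\<dots> = P m ^ 2 * (real_of_int m * (real n - real_of_int m)) * (p * (1 - p))"
    by (simp add: algebra_simps power2_eq_square)
  also have "\<dots> \<le> P m ^ 2 * ((real n - real_of_int m + 1) * (real_of_int m + 1)) * (p * (1 - p))"
  proof -
    have "real_of_int m * (real n - real_of_int m) \<le> (real n - real_of_int m + 1) * (real_of_int m + 1)"
      using a by (simp add: algebra_simps)
    then show ?thesis using p0 p1 by (intro mult_right_mono mult_left_mono) auto
  qed
  finally have "X * (((real n - real_of_int m + 1) * (real_of_int m + 1)) * (p * (1 - p)))
     \<le> P m ^ 2 * (((real n - real_of_int m + 1) * (real_of_int m + 1)) * (p * (1 - p)))"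
    by (simp add: mult.assoc)
  moreover have "((real n - real_of_int m + 1) * (real_of_int m + 1)) * (p * (1 - p)) > 0"
    using a p0 p1 by simp
  ultimately show ?thesis unfolding X_def by (meson mult_le_cancel_right_pos)
qed

lemma H_aux: "\<forall>m. js \<le> m \<and> m \<le> int n \<and> int n - m = int d \<longrightarrow> (P (m - 1) - P m) * Q m \<le> P (m - 1) * P m"
proof (induction d)
  case 0
  show ?case
  proof (intro allI impI)
    fix m assume a: "js \<le> m \<and> m \<le> int n \<and> int n - m = int 0"
    then have "m = int n" by simp
    then have "Q m = P m" using qj_split[of m] qj_gt[of "m+1"] by simp
    then show "(P (m - 1) - P m) * Q m \<le> P (m - 1) * P m"
      using pj_nonneg[of m] by (simp add: algebra_simps)
  qed
next
  case (Suc d)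
  show ?case
  proof (intro allI impI)
    fix m assume a: "js \<le> m \<and> m \<le> int n \<and> int n - m = int (Suc d)"
    have IH: "(P m - P (m + 1)) * Q (m + 1) \<le> P m * P (m + 1)"
      using Suc.IH[rule_format, of "m+1"] a by simp
    have m1: "1 \<le> m" using a js_ge1 by simp
    have d1: "P (m - 1) > P m" using P_decr a by simp
    have d2: "P m > P (m + 1)" using P_decr[of "m+1"] a by simp
    have pos: "P (m + 1) > 0" using pj_pos[of "m+1"] a m1 by simp
    have lc: "P (m - 1) * P (m + 1) \<le> P m ^ 2" using P_lc m1 a by simp
    have "(P (m - 1) - P m) * ((P m - P (m + 1)) * Q (m + 1)) \<le> (P (m - 1) - P m) * (P m * P (m + 1))"
      using IH d1 by (intro mult_left_mono) auto
    also have "\<dots> \<le> P m * (P m - P (m + 1)) * P m"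
    proof -
      have "(P (m - 1) - P m) * P (m + 1) \<le> P m * (P m - P (m + 1))"
        using lc by (simp add: algebra_simps power2_eq_square)
      then have "(P (m - 1) - P m) * P (m + 1) * P m \<le> P m * (P m - P (m + 1)) * P m"
        using d2 pos by (intro mult_right_mono) auto
      then show ?thesis by (simp add: algebra_simps)
    qed
    finally have "((P (m - 1) - P m) * Q (m + 1)) * (P m - P (m + 1)) \<le> (P m * P m) * (P m - P (m + 1))"
      by (simp add: algebra_simps)
    then have "(P (m - 1) - P m) * Q (m + 1) \<le> P m * P m" using d2 by simp
    then show "(P (m - 1) - P m) * Q m \<le> P (m - 1) * P m"
      using qj_split[of m] by (simp add: algebra_simps)
  qed
qed

lemma H: "js \<le> m \<Longrightarrow> m \<le> int n \<Longrightarrow> (P (m - 1) - P m) * Q m \<le> P (m - 1) * P m"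
  using H_aux[of "nat (int n - m)"] by simp

end


context bctx begin

abbreviation "QL t \<equiv> Qlin n p t"

lemma QL_piece:
  assumes "real_of_int k \<le> t" "t \<le> real_of_int k + 1"
  shows "QL t = Q k - P k * (t - real_of_int k)"
proof (cases "t < real_of_int k + 1")
  case True
  then have "\<lfloor>t\<rfloor> = k" using assms by linarith
  then show ?thesis unfolding Qlin_def Let_def pj_def by (simp add: algebra_simps)
next
  case False
  then have t: "t = real_of_int (k + 1)" using assms by simp
  then have "\<lfloor>t\<rfloor> = k + 1" by simp
  then have "QL t = Q (k + 1)" unfolding Qlin_def Let_def using t by simp
  then show ?thesis using t unfolding pj_def by simp
qed

lemma QL_int: "QL (real_of_int k) = Q k"
  using QL_piece[of k "real_of_int k"] by simp

lemma QL_floor: "QL t = (1 - (t - \<lfloor>t\<rfloor>)) * Q \<lfloor>t\<rfloor> + (t - \<lfloor>t\<rfloor>) * Q (\<lfloor>t\<rfloor> + 1)"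
  unfolding Qlin_def Let_def by simp

lemma QL_nonneg: "0 \<le> QL t"
proof -
  have "0 \<le> t - \<lfloor>t\<rfloor>" "t - \<lfloor>t\<rfloor> \<le> 1" by linarith+
  then show ?thesis unfolding QL_floor using qj_nonneg by (intro add_nonneg_nonneg mult_nonneg_nonneg) auto
qed

lemma QL_le1: "QL t \<le> 1"
proof -
  have a: "0 \<le> t - \<lfloor>t\<rfloor>" "t - \<lfloor>t\<rfloor> \<le> 1" by linarith+
  have "(1 - (t - \<lfloor>t\<rfloor>)) * Q \<lfloor>t\<rfloor> \<le> (1 - (t - \<lfloor>t\<rfloor>)) * 1"
    using a qj_le1 by (intro mult_left_mono) auto
  moreover have "(t - \<lfloor>t\<rfloor>) * Q (\<lfloor>t\<rfloor> + 1) \<le> (t - \<lfloor>t\<rfloor>) * 1"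
    using a qj_le1 by (intro mult_left_mono) auto
  ultimately show ?thesis unfolding QL_floor by simp
qed

lemma QL_pos: "t < real n + 1 \<Longrightarrow> QL t > 0"
proof -
  assume t: "t < real n + 1"
  have a: "0 \<le> t - \<lfloor>t\<rfloor>" "t - \<lfloor>t\<rfloor> < 1" by linarith+
  have "\<lfloor>t\<rfloor> \<le> int n" using t by linarith
  then have "Q \<lfloor>t\<rfloor> > 0" using qj_pos by simp
  then have "(1 - (t - \<lfloor>t\<rfloor>)) * Q \<lfloor>t\<rfloor> > 0" using a by simp
  moreover have "(t - \<lfloor>t\<rfloor>) * Q (\<lfloor>t\<rfloor> + 1) \<ge> 0" using a qj_nonneg by simp
  ultimately show ?thesis unfolding QL_floor by linarith
qed

lemma QL_zero: "t \<ge> real n + 1 \<Longrightarrow> QL t = 0"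
proof -
  assume t: "t \<ge> real n + 1"
  have "\<lfloor>t\<rfloor> \<ge> int n + 1" using t by linarith
  then show ?thesis unfolding QL_floor using qj_gt by simp
qed

lemma QL_neg: "t \<le> 0 \<Longrightarrow> QL t = 1"
proof -
  assume t: "t \<le> 0"
  show ?thesis
  proof (cases "t = 0")
    case True then show ?thesis using QL_int[of 0] qj_le0[of 0] by simp
  next
    case False
    then have "\<lfloor>t\<rfloor> + 1 \<le> 0" using t by linarith
    then have f1: "\<lfloor>t\<rfloor> \<le> 0" "\<lfloor>t\<rfloor> + 1 \<le> 0" by linarith+
    have "Q \<lfloor>t\<rfloor> = 1" by (rule qj_le0[OF f1(1)])
    moreover have "Q (\<lfloor>t\<rfloor> + 1) = 1" by (rule qj_le0[OF f1(2)])
    ultimately show ?thesis unfolding QL_floor by (simp add: algebra_simps)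
  qed
qed

definition FF :: "real \<Rightarrow> real \<Rightarrow> real" where "FF \<sigma> t = ln (QL t) + \<sigma> * t"

lemma TL:
  assumes "real_of_int k \<le> s" "s \<le> real_of_int k + 1" "real_of_int k \<le> w" "w \<le> real_of_int k + 1"
    and "QL s > 0" "QL w > 0"
  shows "FF \<sigma> s \<le> FF \<sigma> w + (\<sigma> - P k / QL w) * (s - w)"
proof -
  have e: "QL s = QL w - P k * (s - w)"
    using QL_piece[OF assms(1,2)] QL_piece[OF assms(3,4)] by (simp add: algebra_simps)
  have "ln (QL s) - ln (QL w) = ln (QL s / QL w)" using assms(5,6) by (simp add: ln_div)
  also have "\<dots> \<le> QL s / QL w - 1" using assms(5,6) by (intro ln_le_minus_one) simp
  also have "\<dots> = - (P k / QL w) * (s - w)" unfolding e using assms(6) by (simp add: field_simps)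
  finally show ?thesis unfolding FF_def by (simp add: algebra_simps)
qed

lemma TL':
  assumes "real_of_int k \<le> s" "s \<le> real_of_int k + 1" "real_of_int k \<le> w" "w \<le> real_of_int k + 1"
    and "QL s > 0" "QL w > 0" "(\<sigma> - P k / QL w) * (s - w) \<le> 0"
  shows "FF \<sigma> s \<le> FF \<sigma> w"
  using TL[OF assms(1-6), of \<sigma>] assms(7) by simp

lemma shift_up:
  assumes "\<sigma> \<le> \<sigma>'" "a \<le> s" "FF \<sigma>' s \<le> FF \<sigma>' a"
  shows "FF \<sigma> s \<le> FF \<sigma> a"
proof -
  have "(\<sigma> - \<sigma>') * s \<le> (\<sigma> - \<sigma>') * a"
    using assms(1,2) by (intro mult_left_mono_neg) auto
  then show ?thesis using assms(3) unfolding FF_def by (simp add: algebra_simps)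
qed

lemma shift_down:
  assumes "\<sigma>' \<le> \<sigma>" "s \<le> a" "FF \<sigma>' s \<le> FF \<sigma>' a"
  shows "FF \<sigma> s \<le> FF \<sigma> a"
proof -
  have "(\<sigma> - \<sigma>') * s \<le> (\<sigma> - \<sigma>') * a"
    using assms(1,2) by (intro mult_left_mono) auto
  then show ?thesis using assms(3) unfolding FF_def by (simp add: algebra_simps)
qed

end


context bctx begin

definition "uu j = Q j / P j"
definition "vv j = Q j / P (j - 1)"
definition "rr j = P (j - 1) / P j"
definition "KK j = (vv j - uu j) / ln (rr j)"
abbreviation "AA j \<equiv> yj n p j + 1/2"
abbreviation "BB j \<equiv> xj n p j + 1/2"

lemma AB_eq: "j \<le> int n \<Longrightarrow> AA j = real_of_int j + vv j + KK j \<and> BB j = real_of_int j + uu j + KK j"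
  unfolding xj_def yj_def uu_def vv_def rr_def KK_def by simp

lemma bridge_basic:
  assumes "js \<le> j" "j \<le> int n"
  shows "rr j > 1" "uu j > 0" "vv j = uu j / rr j" "vv j * (rr j - 1) \<le> 1" "vv j \<ge> 0"
    "KK j < 0" "real_of_int j - 1 \<le> AA j" "AA j \<le> real_of_int j" "real_of_int j \<le> BB j" "AA j < BB j"
    "KK j = (uu j / rr j - uu j) / ln (rr j)"
proof -
  have j1: "1 \<le> j" using assms js_ge1 by simp
  have d: "P (j - 1) > P j" using P_decr assms by simp
  have pp: "P j > 0" using pj_pos assms j1 by simp
  have qp: "Q j > 0" using qj_pos assms by simp
  show r: "rr j > 1" unfolding rr_def using d pp by simp
  show u: "uu j > 0" unfolding uu_def using pp qp by simp
  show vu: "vv j = uu j / rr j" unfolding vv_def uu_def rr_def using d pp by (simp add: field_simps)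
  show "vv j \<ge> 0" unfolding vv_def using qp d pp by simp
  have Hj: "(P (j - 1) - P j) * Q j \<le> P (j - 1) * P j" using H assms by simp
  have "vv j * (rr j - 1) = (P (j - 1) - P j) * Q j / (P (j - 1) * P j)"
    unfolding vv_def rr_def using d pp by (simp add: field_simps)
  also have "\<dots> \<le> 1" using Hj d pp by simp
  finally show H1: "vv j * (rr j - 1) \<le> 1" .
  have K: "KK j = (uu j / rr j - uu j) / ln (rr j)" unfolding KK_def vu ..
  then show "KK j = (uu j / rr j - uu j) / ln (rr j)" .
  note G = geomA[OF r u H1[unfolded vu]]
  have e: "AA j = real_of_int j + uu j / rr j + KK j" "BB j = real_of_int j + uu j + KK j"
    using AB_eq[OF assms(2)] vu by auto
  show "KK j < 0" using G(4) K by simp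
  show "real_of_int j - 1 \<le> AA j" using G(2) K e by simp
  show "AA j \<le> real_of_int j" using G(1) K e by simp
  show "real_of_int j \<le> BB j" using G(3) K e by simp
  have "uu j / rr j < uu j" using r u by (simp add: divide_less_eq)
  then show "AA j < BB j" using e by simp
qed

lemma F4:
  assumes "js \<le> j" "j + 1 \<le> int n"
  shows "BB j \<le> AA (j + 1)"
proof -
  have a1: "js \<le> j + 1" "j \<le> int n" using assms by auto
  have j1: "1 \<le> j" using assms js_ge1 by simp
  note b0 = bridge_basic[OF assms(1) a1(2)]
  note b1 = bridge_basic[OF a1(1) assms(2)]
  define r where "r = rr j"
  define r' where "r' = rr (j + 1)"
  define v where "v = vv (j + 1)"
  have pp: "P j > 0" using pj_pos assms j1 by simp
  have pp1: "P (j + 1) > 0" using pj_pos assms j1 by simp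
  have pm: "P (j - 1) > 0" using pj_pos[of "j - 1"] assms j1 by simp
  have uj: "uu j = 1 + v" unfolding v_def uu_def vv_def using qj_split[of j] pp by (simp add: field_simps)
  have rr': "r \<le> r'"
  proof -
    have "P (j - 1) * P (j + 1) \<le> P j ^ 2" using P_lc j1 assms by simp
    then show ?thesis unfolding r_def r'_def rr_def using pp pp1
      by (simp add: field_simps power2_eq_square)
  qed
  have F: "v * (r' - 1) / ln r' \<le> (1 + v) * (1 - 1/r) / ln r"
    using F4abs[of r r' v] b0(1) rr' b1(4,5) unfolding r_def r'_def v_def by simp
  have lr: "ln r > 0" using b0(1) unfolding r_def by simp
  have r0: "r > 0" using b0(1) unfolding r_def by simp
  have eqK: "((1 + v)/r - (1 + v))/ln r = - ((1 + v) * (1 - 1/r) / ln r)"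
    using lr r0 by (simp add: field_simps)
  have K0: "KK j = - ((1 + v) * (1 - 1/r) / ln r)"
    using b0(11) uj eqK unfolding r_def by simp
  have K1: "KK (j + 1) = - (v * (r' - 1) / ln r')"
  proof -
    have "uu (j + 1) = v * r'" using b1(3) b1(1) unfolding v_def r'_def by simp
    then have e: "vv (j + 1) - uu (j + 1) = - (v * (r' - 1))" unfolding v_def by (simp add: algebra_simps)
    have "KK (j + 1) = (vv (j + 1) - uu (j + 1)) / ln r'" unfolding KK_def r'_def ..
    also have "\<dots> = - (v * (r' - 1)) / ln r'" by (simp only: e)
    also have "\<dots> = - (v * (r' - 1) / ln r')" by (rule minus_divide_left[symmetric])
    finally show ?thesis .
  qed
  have "BB j = real_of_int j + uu j + KK j" using AB_eq a1 by simp
  moreover have "AA (j + 1) = real_of_int j + 1 + v + KK (j + 1)" using AB_eq assms unfolding v_def by simp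
  ultimately show ?thesis using uj K0 K1 F by linarith
qed

lemma BB_le:
  assumes "js \<le> j" "j \<le> int n"
  shows "BB j \<le> real_of_int j + 1"
proof (cases "j + 1 \<le> int n")
  case True
  have "AA (j + 1) \<le> real_of_int (j + 1)" using bridge_basic(8)[of "j+1"] assms True by simp
  then show ?thesis using F4[OF assms(1) True] by simp
next
  case False
  then have jn: "j = int n" using assms by simp
  have "Q j = P j" using qj_split[of j] qj_gt[of "j+1"] jn by simp
  moreover have "P j > 0" using pj_pos jn by simp
  ultimately have "uu j = 1" unfolding uu_def by simp
  then show ?thesis using AB_eq[OF assms(2)] bridge_basic(6)[OF assms] by simp
qed

lemma QL_AB:
  assumes "js \<le> j" "j \<le> int n"
  shows "QL (AA j) = - P (j - 1) * KK j" "QL (BB j) = - P j * KK j"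
proof -
  note b = bridge_basic[OF assms]
  have j1: "1 \<le> j" using assms js_ge1 by simp
  have pm: "P (j - 1) > 0" using pj_pos[of "j - 1"] assms j1 by simp
  have pp: "P j > 0" using pj_pos assms j1 by simp
  have "QL (AA j) = Q (j - 1) - P (j - 1) * (AA j - real_of_int (j - 1))"
    using QL_piece[of "j - 1" "AA j"] b(7,8) by simp
  also have "\<dots> = Q j + P (j - 1) - P (j - 1) * (vv j + KK j + 1)"
    using AB_eq[OF assms(2)] qj_split[of "j - 1"] by simp
  also have "\<dots> = - P (j - 1) * KK j" unfolding vv_def using pm by (simp add: field_simps)
  finally show "QL (AA j) = - P (j - 1) * KK j" .
  have "QL (BB j) = Q j - P j * (BB j - real_of_int j)"
    using QL_piece[of j "BB j"] b(9) BB_le[OF assms] by simp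
  also have "\<dots> = - P j * KK j" using AB_eq[OF assms(2)] pp unfolding uu_def by (simp add: field_simps)
  finally show "QL (BB j) = - P j * KK j" .
qed

definition "sg j = P j / QL (BB j)"

lemma sg_props:
  assumes "js \<le> j" "j \<le> int n"
  shows "sg j = -1 / KK j" "P (j - 1) / QL (AA j) = sg j" "sg j > 0"
    "FF (sg j) (AA j) = FF (sg j) (BB j)" "QL (AA j) > 0" "QL (BB j) > 0"
proof -
  note b = bridge_basic[OF assms]
  note q = QL_AB[OF assms]
  have j1: "1 \<le> j" using assms js_ge1 by simp
  have pm: "P (j - 1) > 0" using pj_pos[of "j - 1"] assms j1 by simp
  have pp: "P j > 0" using pj_pos assms j1 by simp
  show s: "sg j = -1 / KK j" unfolding sg_def q using pp b(6) by (simp add: field_simps)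
  show "P (j - 1) / QL (AA j) = sg j" unfolding s q using pm b(6) by (simp add: field_simps)
  show "sg j > 0" unfolding s using b(6) by simp
  show qa: "QL (AA j) > 0" unfolding q using mult_pos_neg[OF pm b(6)] by simp
  show qb: "QL (BB j) > 0" unfolding q using mult_pos_neg[OF pp b(6)] by simp
  have k0: "- KK j > 0" using b(6) by simp
  have la: "ln (QL (AA j)) = ln (P (j - 1)) + ln (- KK j)"
  proof -
    have "QL (AA j) = P (j - 1) * (- KK j)" unfolding q by simp
    then show ?thesis using ln_mult_pos[OF pm k0] by simp
  qed
  have lb: "ln (QL (BB j)) = ln (P j) + ln (- KK j)"
  proof -
    have "QL (BB j) = P j * (- KK j)" unfolding q by simp
    then show ?thesis using ln_mult_pos[OF pp k0] by simp
  qed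
  have "ln (QL (AA j)) - ln (QL (BB j)) = ln (rr j)"
    unfolding la lb rr_def using pm pp by (simp add: ln_div)
  moreover have "sg j * (BB j - AA j) = ln (rr j)"
  proof -
    have "BB j - AA j = uu j - vv j" using AB_eq[OF assms(2)] by simp
    also have "\<dots> = - KK j * ln (rr j)" unfolding KK_def using b(1) by simp
    finally show ?thesis unfolding s using b(6) by simp
  qed
  ultimately show "FF (sg j) (AA j) = FF (sg j) (BB j)" unfolding FF_def by (simp add: algebra_simps)
qed

end


context bctx begin

lemma TLz:
  assumes "real_of_int k \<le> s" "s \<le> real_of_int k + 1" "real_of_int k \<le> w" "w \<le> real_of_int k + 1"
    and "s < real n + 1" "w < real n + 1" "(\<sigma> - P k / QL w) * (s - w) \<le> 0"
  shows "FF \<sigma> s \<le> FF \<sigma> w"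
  using TL'[OF assms(1-4) QL_pos[OF assms(5)] QL_pos[OF assms(6)] assms(7)] .

lemma QL_pos_lt: "QL s > 0 \<Longrightarrow> s < real n + 1"
proof (rule ccontr)
  assume "QL s > 0" "\<not> s < real n + 1"
  then show False using QL_zero[of s] by simp
qed

lemma QL_on_piece_le:
  assumes "real_of_int k \<le> a" "a \<le> b" "b \<le> real_of_int k + 1"
  shows "QL b \<le> QL a"
proof -
  have "QL a = Q k - P k * (a - real_of_int k)" using QL_piece assms by simp
  moreover have "QL b = Q k - P k * (b - real_of_int k)" using QL_piece assms by simp
  moreover have "P k * (a - real_of_int k) \<le> P k * (b - real_of_int k)"
    using assms pj_nonneg by (intro mult_left_mono) auto
  ultimately show ?thesis by simp
qed

lemma div_anti:
  fixes c x y :: real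
  assumes "0 \<le> c" "0 < y" "y \<le> x"
  shows "c / x \<le> c / y"
proof -
  have "0 < x * y" using assms by simp
  then show ?thesis using divide_left_mono[OF assms(3) assms(1)] by simp
qed

lemma M_aux:
  "\<forall>j. js \<le> j \<and> j \<le> int n \<and> int n - j = int d \<longrightarrow>
     (\<forall>s. AA j \<le> s \<longrightarrow> QL s > 0 \<longrightarrow> FF (sg j) s \<le> FF (sg j) (AA j))"
proof (induction d)
  case 0
  show ?case
  proof (intro allI impI)
    fix j s assume a: "js \<le> j \<and> j \<le> int n \<and> int n - j = int 0" and s: "AA j \<le> s" "QL s > 0"
    have jn: "j = int n" using a by simp
    have a1: "js \<le> j" "j \<le> int n" using a by auto
    note b = bridge_basic[OF a1] and sp = sg_props[OF a1]
    have sn: "s < real n + 1" using QL_pos_lt s by simp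
    have An: "AA j < real n + 1" "BB j < real n + 1" using QL_pos_lt sp(5,6) by auto
    show "FF (sg j) s \<le> FF (sg j) (AA j)"
    proof (cases "s \<le> real_of_int j")
      case True
      show ?thesis
        by (rule TLz[of "j - 1"]) (use True s b sn An sp(2) in auto)
    next
      case False
      have "FF (sg j) s \<le> FF (sg j) (BB j)"
        by (rule TLz[of j]) (use False s b sn An BB_le[OF a1] jn in \<open>auto simp: sg_def\<close>)
      then show ?thesis using sp(4) by simp
    qed
  qed
next
  case (Suc d)
  show ?case
  proof (intro allI impI)
    fix j s assume a: "js \<le> j \<and> j \<le> int n \<and> int n - j = int (Suc d)" and s: "AA j \<le> s" "QL s > 0"
    have a1: "js \<le> j" "j \<le> int n" and a2: "js \<le> j + 1" "j + 1 \<le> int n" using a by auto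
    note b = bridge_basic[OF a1] and sp = sg_props[OF a1]
    note b' = bridge_basic[OF a2] and sp' = sg_props[OF a2]
    have IH: "\<forall>s. AA (j + 1) \<le> s \<longrightarrow> QL s > 0 \<longrightarrow> FF (sg (j + 1)) s \<le> FF (sg (j + 1)) (AA (j + 1))"
      using Suc.IH a by auto
    have sn: "s < real n + 1" using QL_pos_lt s by simp
    have An: "AA j < real n + 1" "BB j < real n + 1" "AA (j + 1) < real n + 1"
      using QL_pos_lt sp(5,6) sp'(5) by auto
    have f4: "BB j \<le> AA (j + 1)" using F4[OF a1(1) a2(2)] .
    have bl: "BB j \<le> real_of_int j + 1" using BB_le[OF a1] .
    have FA': "FF (sg j) (AA (j + 1)) \<le> FF (sg j) (BB j)"
      by (rule TLz[of j]) (use f4 b b' sn An bl in \<open>auto simp: sg_def\<close>)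
    show "FF (sg j) s \<le> FF (sg j) (AA j)"
    proof (cases "s \<le> real_of_int j")
      case True
      show ?thesis
        by (rule TLz[of "j - 1"]) (use True s b sn An sp(2) in auto)
    next
      case False
      show ?thesis
      proof (cases "s \<le> AA (j + 1)")
        case True
        have "FF (sg j) s \<le> FF (sg j) (BB j)"
          by (rule TLz[of j]) (use False True s b b' sn An bl in \<open>auto simp: sg_def\<close>)
        then show ?thesis using sp(4) by simp
      next
        case False
        have le: "sg j \<le> sg (j + 1)"
        proof -
          have "QL (AA (j + 1)) \<le> QL (BB j)"
            by (rule QL_on_piece_le[of j]) (use f4 b b' in auto)
          then have "P j / QL (BB j) \<le> P j / QL (AA (j + 1))"
            using sp'(5) pj_nonneg by (intro div_anti) auto
          then show ?thesis using sp'(2) unfolding sg_def by simp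
        qed
        have "FF (sg j) s \<le> FF (sg j) (AA (j + 1))"
          by (rule shift_up[OF le]) (use False IH s in auto)
        then show ?thesis using FA' sp(4) by simp
      qed
    qed
  qed
qed

lemma M_lemma:
  assumes "js \<le> j" "j \<le> int n" "AA j \<le> s" "QL s > 0"
  shows "FF (sg j) s \<le> FF (sg j) (AA j)"
  using M_aux[of "nat (int n - j)"] assms by auto

lemma alpha_step:
  assumes "0 \<le> k" "k + 1 \<le> js - 1"
  shows "P k / Q k \<le> P k / Q (k + 1)" "P k / Q (k + 1) \<le> P (k + 1) / Q (k + 1)"
proof -
  have kn: "k + 1 \<le> int n" using assms js_le by simp
  have q1: "Q (k + 1) > 0" using qj_pos kn by simp
  have "Q (k + 1) \<le> Q k" using qj_split[of k] pj_nonneg[of k] by simp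
  then show "P k / Q k \<le> P k / Q (k + 1)" using q1 pj_nonneg by (intro div_anti) auto
  have "P k \<le> P (k + 1)" using P_incr[of "k + 1"] assms by simp
  then show "P k / Q (k + 1) \<le> P (k + 1) / Q (k + 1)" using q1 by (simp add: divide_right_mono)
qed

lemma alpha_mono_aux:
  "\<forall>a. 0 \<le> a \<and> a + int d \<le> js - 1 \<longrightarrow> P a / Q a \<le> P (a + int d) / Q (a + int d)"
proof (induction d)
  case 0 then show ?case by simp
next
  case (Suc d)
  show ?case
  proof (intro allI impI)
    fix a assume a: "0 \<le> a \<and> a + int (Suc d) \<le> js - 1"
    define b where "b = a + int d"
    have e: "a + int (Suc d) = b + 1" unfolding b_def by simp
    have "P a / Q a \<le> P b / Q b" using Suc.IH a unfolding b_def by auto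
    also have "\<dots> \<le> P (b + 1) / Q (b + 1)"
      using alpha_step[of b] a unfolding b_def by force
    finally show "P a / Q a \<le> P (a + int (Suc d)) / Q (a + int (Suc d))" unfolding e .
  qed
qed

lemma alpha_mono:
  assumes "0 \<le> a" "a \<le> b" "b \<le> js - 1"
  shows "P a / Q a \<le> P b / Q b"
  using alpha_mono_aux[of "nat (b - a)"] assms by auto

lemma CU_aux:
  "\<forall>m::nat. int m \<le> js - 1 \<longrightarrow> P (int m) / Q (int m) \<le> \<sigma> \<longrightarrow>
     (\<forall>s. s \<le> real m \<longrightarrow> FF \<sigma> s \<le> FF \<sigma> (real m))"
proof (intro allI)
  fix m :: nat
  show "int m \<le> js - 1 \<longrightarrow> P (int m) / Q (int m) \<le> \<sigma> \<longrightarrow> (\<forall>s. s \<le> real m \<longrightarrow> FF \<sigma> s \<le> FF \<sigma> (real m))"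
  proof (induction m)
    case 0
    show ?case
    proof (intro impI allI)
      fix s :: real assume h: "int 0 \<le> js - 1" "P (int 0) / Q (int 0) \<le> \<sigma>" "s \<le> real 0"
      have "0 \<le> P 0 / Q 0" using pj_nonneg qj_nonneg by simp
      then have "\<sigma> \<ge> 0" using h by simp
      then have "\<sigma> * s \<le> 0" using h by (simp add: mult_nonneg_nonpos)
      moreover have "QL s = 1" "QL 0 = 1" using QL_neg h by auto
      ultimately show "FF \<sigma> s \<le> FF \<sigma> (real 0)" unfolding FF_def by simp
    qed
  next
    case (Suc m)
    show ?case
    proof (intro impI allI)
      fix s :: real assume h: "int (Suc m) \<le> js - 1" "P (int (Suc m)) / Q (int (Suc m)) \<le> \<sigma>" "s \<le> real (Suc m)"
      have st: "P (int m) / Q (int m) \<le> P (int m) / Q (int m + 1)" "P (int m) / Q (int m + 1) \<le> P (int m + 1) / Q (int m + 1)"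
        using alpha_step[of "int m"] h by auto
      have ks: "int (Suc m) = int m + 1" by simp
      have h2: "P (int m + 1) / Q (int m + 1) \<le> \<sigma>" using h(2) unfolding ks .
      have sb: "P (int m) / Q (int m + 1) \<le> \<sigma>" using st(2) h2 by linarith
      have mn: "int m + 1 \<le> int n" using h js_le by simp
      have ql: "QL (real m + 1) = Q (int m + 1)" using QL_int[of "int m + 1"] by simp
      have step: "FF \<sigma> x \<le> FF \<sigma> (real m + 1)" if "real m \<le> x" "x \<le> real m + 1" for x
      proof (rule TLz[of "int m"])
        show "(\<sigma> - P (int m) / QL (real m + 1)) * (x - (real m + 1)) \<le> 0"
          unfolding ql using sb that by (intro mult_nonneg_nonpos) auto
      qed (use that mn in auto)
      show "FF \<sigma> s \<le> FF \<sigma> (real (Suc m))"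
      proof (cases "s \<le> real m")
        case True
        have am: "P (int m) / Q (int m) \<le> \<sigma>" using st h2 by linarith
        have "FF \<sigma> s \<le> FF \<sigma> (real m)" using Suc.IH h am True by auto
        also have "\<dots> \<le> FF \<sigma> (real m + 1)" using step by simp
        also have "real m + 1 = real (Suc m)" by simp
        finally show ?thesis .
      next
        case False
        have e: "real (Suc m) = real m + 1" by simp
        show ?thesis unfolding e using step[of s] h(3) False unfolding e by simp
      qed
    qed
  qed
qed

lemma CU:
  assumes "int m \<le> js - 1" "P (int m) / Q (int m) \<le> \<sigma>" "s \<le> real m"
  shows "FF \<sigma> s \<le> FF \<sigma> (real m)"
  using CU_aux assms by blast

definition "LRend s \<longleftrightarrow> (js \<le> int n \<longrightarrow> s \<le> AA js) \<and> s < real n + 1"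

lemma LRend_le: "LRend s \<Longrightarrow> s \<le> real_of_int js"
proof -
  assume a: "LRend s"
  show ?thesis
  proof (cases "js \<le> int n")
    case True
    then show ?thesis using a bridge_basic(8)[of js] unfolding LRend_def by auto
  next
    case False
    then have "js = int n + 1" using js_le by simp
    then show ?thesis using a unfolding LRend_def by simp
  qed
qed

lemma CD_aux:
  "\<forall>m::nat. int m \<le> js - 1 \<and> js - 1 - int m = int d \<longrightarrow> \<sigma> \<le> P (int m) / Q (int m) \<longrightarrow>
     (\<forall>s. real m \<le> s \<and> LRend s \<longrightarrow> FF \<sigma> s \<le> FF \<sigma> (real m))"
proof (induction d)
  case 0
  show ?case
  proof (intro allI impI)
    fix m :: nat and s :: real
    assume h: "int m \<le> js - 1 \<and> js - 1 - int m = int 0" "\<sigma> \<le> P (int m) / Q (int m)" "real m \<le> s \<and> LRend s"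
    have mj: "int m = js - 1" using h by simp
    have "s \<le> real_of_int js" using LRend_le h by simp
    then have s1: "s \<le> real m + 1" using mj by linarith
    have mn: "int m \<le> int n" using h js_le by simp
    have sn: "s < real n + 1" using h unfolding LRend_def by simp
    show "FF \<sigma> s \<le> FF \<sigma> (real m)"
    proof (rule TLz[of "int m"])
      show "(\<sigma> - P (int m) / QL (real m)) * (s - real m) \<le> 0"
        using QL_int[of "int m"] h by (intro mult_nonpos_nonneg) auto
    qed (use s1 h mn sn in auto)
  qed
next
  case (Suc d)
  show ?case
  proof (intro allI impI)
    fix m :: nat and s :: real
    assume h: "int m \<le> js - 1 \<and> js - 1 - int m = int (Suc d)" "\<sigma> \<le> P (int m) / Q (int m)" "real m \<le> s \<and> LRend s"
    have mn: "int m + 1 \<le> int n" using h js_le by simp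
    have sn: "s < real n + 1" using h unfolding LRend_def by simp
    have st: "P (int m) / Q (int m) \<le> P (int m + 1) / Q (int m + 1)"
      using alpha_step[of "int m"] h by force
    have piece: "FF \<sigma> x \<le> FF \<sigma> (real m)" if "real m \<le> x" "x \<le> real m + 1" for x
    proof (rule TLz[of "int m"])
      show "(\<sigma> - P (int m) / QL (real m)) * (x - real m) \<le> 0"
        using QL_int[of "int m"] h that by (intro mult_nonpos_nonneg) auto
    qed (use that mn in auto)
    show "FF \<sigma> s \<le> FF \<sigma> (real m)"
    proof (cases "s \<le> real m + 1")
      case True then show ?thesis using piece h by simp
    next
      case False
      have ks: "int (Suc m) = int m + 1" by simp
      have c1: "int (Suc m) \<le> js - 1 \<and> js - 1 - int (Suc m) = int d" using h by simp
      have c2: "\<sigma> \<le> P (int (Suc m)) / Q (int (Suc m))" unfolding ks using st h by linarith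
      have c3: "real (Suc m) \<le> s \<and> LRend s" using h False by simp
      have IH: "FF \<sigma> s \<le> FF \<sigma> (real (Suc m))"
        using Suc.IH[rule_format, OF c1 c2 c3] .
      have e: "real (Suc m) = real m + 1" by simp
      show ?thesis using IH[unfolded e] piece[of "real m + 1"] by linarith
    qed
  qed
qed

lemma CD:
  assumes "int m \<le> js - 1" "\<sigma> \<le> P (int m) / Q (int m)" "real m \<le> s" "LRend s"
  shows "FF \<sigma> s \<le> FF \<sigma> (real m)"
  using CD_aux[of "nat (js - 1 - int m)" \<sigma>] assms by auto

end


context bctx begin

lemma N_aux:
  "\<forall>j. js \<le> j \<and> j \<le> int n \<and> j - js = int d \<longrightarrow>
     (\<forall>s. s \<le> BB j \<longrightarrow> FF (sg j) s \<le> FF (sg j) (BB j))"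
proof (induction d)
  case 0
  show ?case
  proof (intro allI impI)
    fix j s assume a: "js \<le> j \<and> j \<le> int n \<and> j - js = int 0" and s: "s \<le> BB j"
    have a1: "js \<le> j" "j \<le> int n" using a by auto
    have jj: "j = js" using a by simp
    note b = bridge_basic[OF a1] and sp = sg_props[OF a1]
    have An: "AA j < real n + 1" "BB j < real n + 1" using QL_pos_lt sp(5,6) by auto
    have sn: "s < real n + 1" using s An by simp
    have bl: "BB j \<le> real_of_int j + 1" using BB_le[OF a1] .
    have j1: "1 \<le> j" using a1 js_ge1 by simp
    have FA: "FF (sg j) (AA j) = FF (sg j) (BB j)" using sp(4) .
    show "FF (sg j) s \<le> FF (sg j) (BB j)"
    proof (cases "real_of_int j \<le> s")
      case True
      show ?thesis
        by (rule TLz[of j]) (use True s b sn An bl in \<open>auto simp: sg_def\<close>)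
    next
      case False
      show ?thesis
      proof (cases "real_of_int j - 1 \<le> s")
        case True
        have "FF (sg j) s \<le> FF (sg j) (AA j)"
          by (rule TLz[of "j - 1"]) (use True False s b sn An sp(2) in auto)
        then show ?thesis using FA by simp
      next
        case False
        define m where "m = nat (j - 1)"
        have mr: "real m = real_of_int (j - 1)" "int m = j - 1" unfolding m_def using j1 by auto
        have qa: "QL (AA j) \<le> Q (j - 1)"
          using QL_on_piece_le[of "j - 1" "real_of_int (j - 1)" "AA j"] b QL_int[of "j - 1"] by simp
        have "P (j - 1) / Q (j - 1) \<le> P (j - 1) / QL (AA j)"
          using qa sp(5) pj_nonneg by (intro div_anti) auto
        then have c: "P (int m) / Q (int m) \<le> sg j" using sp(2) mr by simp
        have "FF (sg j) s \<le> FF (sg j) (real m)"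
          by (rule CU) (use c mr jj False in auto)
        also have "\<dots> \<le> FF (sg j) (AA j)" unfolding mr
          by (rule TLz[of "j - 1"]) (use b An sp(2) in auto)
        finally show ?thesis using FA by simp
      qed
    qed
  qed
next
  case (Suc d)
  show ?case
  proof (intro allI impI)
    fix j s assume a: "js \<le> j \<and> j \<le> int n \<and> j - js = int (Suc d)" and s: "s \<le> BB j"
    have a1: "js \<le> j" "j \<le> int n" and a2: "js \<le> j - 1" "j - 1 \<le> int n" using a by auto
    note b = bridge_basic[OF a1] and sp = sg_props[OF a1]
    note b' = bridge_basic[OF a2] and sp' = sg_props[OF a2]
    have IH: "\<forall>s. s \<le> BB (j - 1) \<longrightarrow> FF (sg (j - 1)) s \<le> FF (sg (j - 1)) (BB (j - 1))"
      using Suc.IH a by auto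
    have An: "AA j < real n + 1" "BB j < real n + 1" "BB (j - 1) < real n + 1"
      using QL_pos_lt sp(5,6) sp'(6) by auto
    have sn: "s < real n + 1" using s An by simp
    have bl: "BB j \<le> real_of_int j + 1" using BB_le[OF a1] .
    have f4: "BB (j - 1) \<le> AA j" using F4[OF a2(1)] a1 by simp
    have FA: "FF (sg j) (AA j) = FF (sg j) (BB j)" using sp(4) .
    show "FF (sg j) s \<le> FF (sg j) (BB j)"
    proof (cases "real_of_int j \<le> s")
      case True
      show ?thesis
        by (rule TLz[of j]) (use True s b sn An bl in \<open>auto simp: sg_def\<close>)
    next
      case False
      show ?thesis
      proof (cases "real_of_int j - 1 \<le> s")
        case True
        have "FF (sg j) s \<le> FF (sg j) (AA j)"
          by (rule TLz[of "j - 1"]) (use True False s b sn An sp(2) in auto)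
        then show ?thesis using FA by simp
      next
        case False
        have le: "sg (j - 1) \<le> sg j"
        proof -
          have "QL (AA j) \<le> QL (BB (j - 1))"
            by (rule QL_on_piece_le[of "j - 1"]) (use f4 b b' in auto)
          then have "P (j - 1) / QL (BB (j - 1)) \<le> P (j - 1) / QL (AA j)"
            using sp(5) pj_nonneg by (intro div_anti) auto
          then show ?thesis using sp(2) unfolding sg_def by simp
        qed
        have "FF (sg j) s \<le> FF (sg j) (BB (j - 1))"
          by (rule shift_down[OF le]) (use False IH b' in auto)
        also have "\<dots> \<le> FF (sg j) (AA j)"
          by (rule TLz[of "j - 1"]) (use b b' An sp(2) f4 in auto)
        finally show ?thesis using FA by simp
      qed
    qed
  qed
qed

lemma N_lemma:
  assumes "js \<le> j" "j \<le> int n" "s \<le> BB j"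
  shows "FF (sg j) s \<le> FF (sg j) (BB j)"
  using N_aux[of "nat (j - js)"] assms by auto

lemma BR:
  assumes "js \<le> j" "j \<le> int n" "QL s > 0"
  shows "FF (sg j) s \<le> FF (sg j) (AA j)"
proof (cases "AA j \<le> s")
  case True then show ?thesis using M_lemma assms by simp
next
  case False
  then have "s \<le> BB j" using bridge_basic(10)[OF assms(1,2)] by simp
  then show ?thesis using N_lemma assms sg_props(4)[OF assms(1,2)] by simp
qed

lemma LR_neg:
  assumes "t \<le> 0" "QL s > 0"
  shows "FF 0 s \<le> FF 0 t"
proof -
  have "ln (QL s) \<le> ln 1" using assms QL_le1 by (subst ln_le_cancel_iff) auto
  then show ?thesis unfolding FF_def using QL_neg[OF assms(1)] by simp
qed

end


context bctx begin

lemma LR: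
  assumes t0: "0 \<le> t" and tn: "t < real n + 1" and tA: "js \<le> int n \<longrightarrow> t < AA js" and s: "QL s > 0"
  shows "FF (P \<lfloor>t\<rfloor> / QL t) s \<le> FF (P \<lfloor>t\<rfloor> / QL t) t"
proof -
  define k0 where "k0 = \<lfloor>t\<rfloor>"
  define \<sigma> where "\<sigma> = P k0 / QL t"
  have tjs: "t < real_of_int js"
  proof (cases "js \<le> int n")
    case True then show ?thesis using tA bridge_basic(8)[of js] by fastforce
  next
    case False
    then have "js = int n + 1" using js_le by simp
    then show ?thesis using tn by simp
  qed
  have k0: "0 \<le> k0" "k0 \<le> js - 1" "k0 \<le> int n" "real_of_int k0 \<le> t" "t < real_of_int k0 + 1"
    unfolding k0_def using t0 tjs tn by linarith+
  have m0: "int (nat k0) = k0" "real (nat k0) = real_of_int k0" using k0 by auto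
  have qt: "QL t > 0" using QL_pos tn by simp
  have qtk: "QL t \<le> Q k0"
    using QL_on_piece_le[of k0 "real_of_int k0" t] k0 QL_int[of k0] by simp
  have qtk1: "Q (k0 + 1) \<le> QL t"
    using QL_on_piece_le[of k0 t "real_of_int k0 + 1"] k0 QL_int[of "k0 + 1"] by simp
  have sl: "P k0 / Q k0 \<le> \<sigma>" unfolding \<sigma>_def using qtk qt pj_nonneg by (intro div_anti) auto
  have zero: "(\<sigma> - P k0 / QL t) * (x - t) \<le> 0" for x unfolding \<sigma>_def by simp
  have piece: "FF \<sigma> x \<le> FF \<sigma> t" if "real_of_int k0 \<le> x" "x \<le> real_of_int k0 + 1" "x < real n + 1" for x
    by (rule TLz[of k0]) (use that k0 tn zero in auto)
  have up: "\<sigma> \<le> P (k0 + 1) / Q (k0 + 1)" if "k0 + 1 \<le> js - 1"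
  proof -
    have q1: "Q (k0 + 1) > 0" using qj_pos that js_le by simp
    have "\<sigma> \<le> P k0 / Q (k0 + 1)" unfolding \<sigma>_def using qtk1 q1 pj_nonneg by (intro div_anti) auto
    also have "\<dots> \<le> P (k0 + 1) / Q (k0 + 1)" using alpha_step(2)[of k0] that k0 by simp
    finally show ?thesis .
  qed
  have claim1: "FF \<sigma> x \<le> FF \<sigma> t" if x: "LRend x" for x
  proof -
    have xn: "x < real n + 1" using x unfolding LRend_def by simp
    show ?thesis
    proof (cases "x \<le> real_of_int k0")
      case True
      have "FF \<sigma> x \<le> FF \<sigma> (real (nat k0))"
        by (rule CU) (use True k0 sl m0 in auto)
      also have "\<dots> \<le> FF \<sigma> t" unfolding m0 by (rule piece) (use k0 tn in auto)
      finally show ?thesis .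
    next
      case False
      show ?thesis
      proof (cases "x \<le> real_of_int k0 + 1")
        case True then show ?thesis using False xn piece by simp
      next
        case False
        have xj: "x \<le> real_of_int js" using LRend_le x by simp
        have kk: "k0 + 1 \<le> js - 1" using False xj by linarith
        have "k0 + 1 \<le> int n" using kk js_le by simp
        then have kn: "real_of_int k0 + 1 < real n + 1" by linarith
        have m1: "int (nat (k0 + 1)) = k0 + 1" "real (nat (k0 + 1)) = real_of_int k0 + 1" using k0 by auto
        have "FF \<sigma> x \<le> FF \<sigma> (real (nat (k0 + 1)))"
          by (rule CD) (use up[OF kk] kk m1 False x in auto)
        also have "\<dots> \<le> FF \<sigma> t" unfolding m1 by (rule piece) (use k0 kn in auto)
        finally show ?thesis .
      qed
    qed
  qed
  have "FF \<sigma> s \<le> FF \<sigma> t"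
  proof (cases "js \<le> int n \<and> AA js < s")
    case False
    have "LRend s" unfolding LRend_def using False QL_pos_lt[OF s] by auto
    then show ?thesis using claim1 by simp
  next
    case True
    then have jn: "js \<le> int n" and As: "AA js < s" by auto
    note b = bridge_basic[OF order_refl jn] and sp = sg_props[OF order_refl jn]
    have Aend: "LRend (AA js)" unfolding LRend_def using QL_pos_lt[OF sp(5)] by simp
    have le: "\<sigma> \<le> sg js"
    proof (cases "k0 = js - 1")
      case True
      have "QL (AA js) \<le> QL t"
        by (rule QL_on_piece_le[of k0]) (use True k0 tA jn b in auto)
      then have "P k0 / QL t \<le> P k0 / QL (AA js)" using sp(5) pj_nonneg by (intro div_anti) auto
      then show ?thesis unfolding \<sigma>_def using sp(2) True by simp
    next
      case False
      then have kk: "k0 + 1 \<le> js - 1" using k0 by simp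
      have "\<sigma> \<le> P (k0 + 1) / Q (k0 + 1)" using up[OF kk] .
      also have "\<dots> \<le> P (js - 1) / Q (js - 1)" using alpha_mono[of "k0 + 1" "js - 1"] kk k0 by simp
      also have "\<dots> \<le> P (js - 1) / QL (AA js)"
      proof -
        have "QL (AA js) \<le> Q (js - 1)"
          using QL_on_piece_le[of "js - 1" "real_of_int (js - 1)" "AA js"] b QL_int[of "js - 1"] by simp
        then show ?thesis using sp(5) pj_nonneg by (intro div_anti) auto
      qed
      finally show ?thesis using sp(2) by simp
    qed
    have "FF \<sigma> s \<le> FF \<sigma> (AA js)"
      by (rule shift_up[OF le]) (use As M_lemma[OF order_refl jn, of s] s in auto)
    also have "\<dots> \<le> FF \<sigma> t" using claim1[OF Aend] .
    finally show ?thesis .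
  qed
  then show ?thesis unfolding \<sigma>_def k0_def .
qed

lemma RN:
  assumes j: "js \<le> j" "j \<le> int n" and tB: "BB j \<le> t" and tA: "j + 1 \<le> int n \<longrightarrow> t \<le> AA (j + 1)"
    and tn: "t < real n + 1" and s: "QL s > 0"
  shows "FF (P j / QL t) s \<le> FF (P j / QL t) t"
proof -
  define \<sigma> where "\<sigma> = P j / QL t"
  note b = bridge_basic[OF j] and sp = sg_props[OF j]
  have t1: "real_of_int j \<le> t" using b tB by simp
  have t2: "t \<le> real_of_int j + 1"
  proof (cases "j + 1 \<le> int n")
    case True
    then show ?thesis using tA bridge_basic(8)[of "j + 1"] j by fastforce
  next
    case False
    then have "j = int n" using j by simp
    then show ?thesis using tn by simp
  qed
  have qt: "QL t > 0" using QL_pos tn by simp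
  have sn: "s < real n + 1" using QL_pos_lt s by simp
  have Bn: "BB j < real n + 1" using QL_pos_lt sp(6) by simp
  have bl: "BB j \<le> real_of_int j + 1" using BB_le[OF j] .
  have zero: "(\<sigma> - P j / QL t) * (x - t) \<le> 0" for x unfolding \<sigma>_def by simp
  have piece: "FF \<sigma> x \<le> FF \<sigma> t" if "real_of_int j \<le> x" "x \<le> real_of_int j + 1" "x < real n + 1" for x
    by (rule TLz[of j]) (use that t1 t2 tn zero in auto)
  have "FF \<sigma> s \<le> FF \<sigma> t"
  proof (cases "real_of_int j \<le> s")
    case False
    have le: "sg j \<le> \<sigma>"
    proof -
      have "QL t \<le> QL (BB j)" by (rule QL_on_piece_le[of j]) (use b tB t2 in auto)
      then have "P j / QL (BB j) \<le> P j / QL t" using qt pj_nonneg by (intro div_anti) auto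
      then show ?thesis unfolding \<sigma>_def sg_def .
    qed
    have "FF \<sigma> s \<le> FF \<sigma> (BB j)"
      by (rule shift_down[OF le]) (use False b N_lemma[OF j, of s] in auto)
    also have "\<dots> \<le> FF \<sigma> t" by (rule piece) (use b bl Bn in auto)
    finally show ?thesis .
  next
    case True
    show ?thesis
    proof (cases "s \<le> real_of_int j + 1")
      case True
      then show ?thesis using piece \<open>real_of_int j \<le> s\<close> sn by simp
    next
      case False
      have jn: "j + 1 \<le> int n" using False sn by linarith
      have j2: "js \<le> j + 1" using j by simp
      note b' = bridge_basic[OF j2 jn] and sp' = sg_props[OF j2 jn]
      have As: "AA (j + 1) \<le> s" using b' False by simp
      have le: "\<sigma> \<le> sg (j + 1)"
      proof -
        have "QL (AA (j + 1)) \<le> QL t" by (rule QL_on_piece_le[of j]) (use tA jn t1 b' in auto)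
        then have "P j / QL t \<le> P j / QL (AA (j + 1))" using sp'(5) pj_nonneg by (intro div_anti) auto
        then show ?thesis unfolding \<sigma>_def using sp'(2) by simp
      qed
      have "FF \<sigma> s \<le> FF \<sigma> (AA (j + 1))"
        by (rule shift_up[OF le]) (use As M_lemma[OF j2 jn, of s] s in auto)
      also have "\<dots> \<le> FF \<sigma> t"
        by (rule piece) (use b' tA jn t1 QL_pos_lt[OF sp'(5)] in auto)
      finally show ?thesis .
    qed
  qed
  then show ?thesis unfolding \<sigma>_def .
qed

end


context bctx begin

lemma exp_powr': "exp (a::real) powr b = exp (b * a)"
  by (simp add: powr_def)

lemma exp_LC: "log_concave_fun (\<lambda>s. exp (c - \<sigma> * s))"
  unfolding log_concave_fun_def
proof (intro conjI allI impI)
  fix x y t :: real assume "0 < t \<and> t < 1"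
  have "exp (c - \<sigma> * x) powr (1 - t) * exp (c - \<sigma> * y) powr t
      = exp ((1 - t) * (c - \<sigma> * x) + t * (c - \<sigma> * y))"
    by (simp add: exp_powr' exp_add)
  also have "(1 - t) * (c - \<sigma> * x) + t * (c - \<sigma> * y) = c - \<sigma> * ((1 - t) * x + t * y)"
    by (simp add: algebra_simps)
  finally show "exp (c - \<sigma> * x) powr (1 - t) * exp (c - \<sigma> * y) powr t \<le> exp (c - \<sigma> * ((1 - t) * x + t * y))"
    by simp
qed simp

lemma maj:
  assumes "\<forall>s. QL s > 0 \<longrightarrow> FF \<sigma> s \<le> c"
  shows "QL y \<le> exp (c - \<sigma> * y)"
proof (cases "QL y > 0")
  case True
  then have "ln (QL y) \<le> c - \<sigma> * y" using assms unfolding FF_def by force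
  then have "exp (ln (QL y)) \<le> exp (c - \<sigma> * y)" by simp
  then show ?thesis using True by simp
next
  case False
  then have "QL y = 0" using QL_nonneg[of y] by simp
  then show ?thesis by simp
qed

lemma LC_val:
  assumes "log_concave_fun g0" "\<forall>y. QL y \<le> g0 y" "g0 t = V"
    and "\<And>g. log_concave_fun g \<Longrightarrow> (\<forall>y. QL y \<le> g y) \<Longrightarrow> V \<le> g t"
  shows "QlinLC n p t = V"
  unfolding QlinLC_def
proof (rule cInf_eq_minimum)
  show "V \<in> {g t |g. log_concave_fun g \<and> (\<forall>y. QL y \<le> g y)}" using assms(1-3) by blast
next
  fix v assume "v \<in> {g t |g. log_concave_fun g \<and> (\<forall>y. QL y \<le> g y)}"
  then show "V \<le> v" using assms(4) by blast
qed

lemma val_nonbridge: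
  assumes "\<forall>s. QL s > 0 \<longrightarrow> FF \<sigma> s \<le> FF \<sigma> t" "QL t > 0"
  shows "QlinLC n p t = QL t"
proof (rule LC_val[of "\<lambda>s. exp (FF \<sigma> t - \<sigma> * s)"])
  show "log_concave_fun (\<lambda>s. exp (FF \<sigma> t - \<sigma> * s))" by (rule exp_LC)
  show "\<forall>y. QL y \<le> exp (FF \<sigma> t - \<sigma> * y)" using maj assms(1) by blast
  show "exp (FF \<sigma> t - \<sigma> * t) = QL t" unfolding FF_def using assms(2) by simp
qed simp

lemma val_zero:
  assumes "t \<ge> real n + 1"
  shows "QlinLC n p t = QL t"
proof (rule LC_val[of "\<lambda>s. if s < real n + 1 then 1 else 0"])
  show "log_concave_fun (\<lambda>s. if s < real n + 1 then 1 else 0 :: real)"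
    unfolding log_concave_fun_def
  proof (intro conjI allI impI)
    fix x y \<theta> :: real assume th: "0 < \<theta> \<and> \<theta> < 1"
    show "(if x < real n + 1 then 1 else 0) powr (1 - \<theta>) * (if y < real n + 1 then 1 else 0) powr \<theta>
        \<le> (if (1 - \<theta>) * x + \<theta> * y < real n + 1 then 1 else (0::real))"
    proof (cases "x < real n + 1 \<and> y < real n + 1")
      case True
      have "(1 - \<theta>) * x < (1 - \<theta>) * (real n + 1)" using True th by (intro mult_strict_left_mono) auto
      moreover have "\<theta> * y < \<theta> * (real n + 1)" using True th by (intro mult_strict_left_mono) auto
      ultimately have "(1 - \<theta>) * x + \<theta> * y < real n + 1" by (simp add: algebra_simps)
      then show ?thesis using True by simp
    next
      case False
      then show ?thesis by auto
    qed
  qed simp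
  show "\<forall>y. QL y \<le> (if y < real n + 1 then 1 else 0)" using QL_le1 QL_zero by simp
  show "(if t < real n + 1 then 1 else 0) = QL t" using assms QL_zero by simp
next
  fix g assume "log_concave_fun g"
  then show "QL t \<le> g t" using QL_zero assms unfolding log_concave_fun_def by simp
qed

lemma val_endpoint:
  assumes "js \<le> j" "j \<le> int n" "t = AA j \<or> t = BB j"
  shows "QlinLC n p t = QL t"
proof (rule val_nonbridge[of "sg j"])
  note sp = sg_props[OF assms(1,2)]
  show "QL t > 0" using assms(3) sp by auto
  have "FF (sg j) t = FF (sg j) (AA j)" using assms(3) sp(4) by auto
  then show "\<forall>s. QL s > 0 \<longrightarrow> FF (sg j) s \<le> FF (sg j) t" using BR assms by simp
qed

lemma val_bridge:
  assumes j: "js \<le> j" "j \<le> int n" and t: "AA j < t" "t < BB j"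
  shows "QlinLC n p t = QInterp n p (t - 1/2) j"
proof -
  note b = bridge_basic[OF j] and sp = sg_props[OF j]
  define A where "A = AA j"
  define B where "B = BB j"
  define c where "c = FF (sg j) A"
  define d where "d = (t - A) / (B - A)"
  have AB: "A < B" unfolding A_def B_def using b by simp
  have d01: "0 < d" "d < 1" unfolding d_def using t AB unfolding A_def B_def by (auto simp: field_simps)
  have dBA: "d * (B - A) = t - A" unfolding d_def using AB by simp
  have "(1 - d) * A + d * B = A + d * (B - A)" by (simp add: algebra_simps)
  then have td: "t = (1 - d) * A + d * B" using dBA by simp
  have dd: "((t - 1/2) - yj n p j) / (xj n p j - yj n p j) = d" unfolding d_def A_def B_def
    by (simp add: algebra_simps)
  have QI: "QInterp n p (t - 1/2) j = QL A powr (1 - d) * QL B powr d"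
    unfolding QInterp_def Let_def dd A_def B_def by simp
  have qa: "QL A > 0" and qb: "QL B > 0" using sp unfolding A_def B_def by auto
  have la: "ln (QL A) = c - sg j * A" unfolding c_def FF_def by simp
  have lb: "ln (QL B) = c - sg j * B" using sp(4) unfolding c_def FF_def A_def B_def by simp
  have V: "QL A powr (1 - d) * QL B powr d = exp (c - sg j * t)"
  proof -
    have "QL A powr (1 - d) * QL B powr d = exp ((1 - d) * ln (QL A)) * exp (d * ln (QL B))"
      using qa qb by (simp add: powr_def)
    also have "\<dots> = exp ((1 - d) * (c - sg j * A) + d * (c - sg j * B))" unfolding la lb by (simp add: exp_add)
    also have "(1 - d) * (c - sg j * A) + d * (c - sg j * B) = c - sg j * t" unfolding td by (simp add: algebra_simps)
    finally show ?thesis .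
  qed
  show ?thesis unfolding QI
  proof (rule LC_val[of "\<lambda>s. exp (c - sg j * s)"])
    show "log_concave_fun (\<lambda>s. exp (c - sg j * s))" by (rule exp_LC)
    show "\<forall>y. QL y \<le> exp (c - sg j * y)" using maj BR[OF j] unfolding c_def A_def by blast
    show "exp (c - sg j * t) = QL A powr (1 - d) * QL B powr d" using V by simp
  next
    fix g assume g: "log_concave_fun g" "\<forall>y. QL y \<le> g y"
    have g0: "\<And>y. 0 \<le> g y" using g(1) unfolding log_concave_fun_def by simp
    have "QL A powr (1 - d) * QL B powr d \<le> g A powr (1 - d) * g B powr d"
      using g(2) d01 QL_nonneg g0 by (intro mult_mono powr_mono2) auto
    also have "\<dots> \<le> g ((1 - d) * A + d * B)" using g(1) d01 unfolding log_concave_fun_def by blast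
    finally show "QL A powr (1 - d) * QL B powr d \<le> g t" unfolding td .
  qed
qed

end


theorem proposition2p10:
  fixes n :: nat and p x :: real
  assumes "n \<ge> 1" and "0 < p" and "p < 1"
  shows "(\<forall>j::int. jstar n p \<le> j \<and> j \<le> int n \<and> x \<in> deltaj n p j \<longrightarrow>
            QlinLC n p (x + 1/2) = QInterp n p x j)
       \<and> ((\<nexists>j::int. jstar n p \<le> j \<and> j \<le> int n \<and> x \<in> deltaj n p j) \<longrightarrow>
            QlinLC n p (x + 1/2) = Qlin n p (x + 1/2))"
proof -
  interpret bctx n p using assms by unfold_locales
  define t where "t = x + 1/2"
  have mem: "x \<in> deltaj n p j \<longleftrightarrow> AA j < t \<and> t < BB j" for j
    unfolding deltaj_def t_def by auto
  have part1: "QlinLC n p t = QInterp n p x j" if "js \<le> j" "j \<le> int n" "x \<in> deltaj n p j" for j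
  proof -
    have "QlinLC n p t = QInterp n p (t - 1/2) j"
      using val_bridge that mem by simp
    then show ?thesis unfolding t_def by simp
  qed
  have part2: "QlinLC n p t = QL t" if nex: "\<nexists>j::int. js \<le> j \<and> j \<le> int n \<and> x \<in> deltaj n p j"
  proof -
    have nb: "\<not> (AA j < t \<and> t < BB j)" if "js \<le> j" "j \<le> int n" for j
      using nex that mem by blast
    show ?thesis
    proof (cases "t \<ge> real n + 1")
      case True then show ?thesis using val_zero by simp
    next
      case False
      then have tn: "t < real n + 1" by simp
      show ?thesis
      proof (cases "\<exists>j. js \<le> j \<and> j \<le> int n \<and> (t = AA j \<or> t = BB j)")
        case True
        then show ?thesis using val_endpoint by blast
      next
        case False
        then have ne: "\<And>j. js \<le> j \<Longrightarrow> j \<le> int n \<Longrightarrow> t \<noteq> AA j \<and> t \<noteq> BB j" by blast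
        have qt: "QL t > 0" using QL_pos tn by simp
        show ?thesis
        proof (cases "t \<le> 0")
          case True
          show ?thesis by (rule val_nonbridge[of 0]) (use LR_neg True qt in auto)
        next
          case False
          show ?thesis
          proof (cases "js \<le> int n \<longrightarrow> t < AA js")
            case True
            show ?thesis by (rule val_nonbridge[of "P \<lfloor>t\<rfloor> / QL t"]) (use LR False True tn qt in auto)
          next
            case False
            then have jn: "js \<le> int n" and tA: "AA js \<le> t" by auto
            define k where "k = \<lfloor>t\<rfloor>"
            have kt: "real_of_int k \<le> t" "t < real_of_int k + 1" unfolding k_def by linarith+
            have kn: "k \<le> int n" using kt tn by linarith
            have kjs: "js \<le> k"
            proof (rule ccontr)
              assume "\<not> js \<le> k"
              then have "t < real_of_int js" using kt by linarith
              moreover have "real_of_int js \<le> BB js" using bridge_basic(9)[OF order_refl jn] .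
              moreover have "AA js < t" using tA ne[OF order_refl jn] by auto
              ultimately show False using nb[OF order_refl jn] by simp
            qed
            note b = bridge_basic[OF kjs kn]
            have tB: "BB k \<le> t"
            proof (rule ccontr)
              assume "\<not> BB k \<le> t"
              moreover have "AA k < t" using b kt ne[OF kjs kn] by fastforce
              ultimately show False using nb[OF kjs kn] by simp
            qed
            have tA1: "k + 1 \<le> int n \<longrightarrow> t \<le> AA (k + 1)"
            proof
              assume k1: "k + 1 \<le> int n"
              have kj1: "js \<le> k + 1" using kjs by simp
              show "t \<le> AA (k + 1)"
              proof (rule ccontr)
                assume "\<not> t \<le> AA (k + 1)"
                moreover have "t < BB (k + 1)" using bridge_basic(9)[OF kj1 k1] kt by simp
                ultimately show False using nb[OF kj1 k1] by simp
              qed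
            qed
            show ?thesis by (rule val_nonbridge[of "P k / QL t"]) (use RN[OF kjs kn tB tA1 tn] qt in auto)
          qed
        qed
      qed
    qed
  qed
  show ?thesis using part1 part2 unfolding t_def by blast
qed


end
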